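(* Let $n\ge 3$ and let $x_1<x_2<\dots<x_n$ be nodes with data values $f_1,\dots,f_n$. Set $h_i=x_{i+1}-x_i$, $m_i=(f_{i+1}-f_i)/h_i$ for $1\le i\le n-1$, and $\lambda_i=\frac{h_{i+1}}{h_i+h_{i+1}}$, $\mu_i=\frac{h_i}{h_i+h_{i+1}}$ for $1\le i\le n-2$. Let $P$ be the cubic spline defined as follows. Given boundary values $\dot f_1,\dot f_n\in\mathbb{R}$, the interior derivative values $\dot f_2,\dots,\dot f_{n-1}$ are the unique solution of the linear system $$\lambda_i\dot f_i+2\dot f_{i+1}+\mu_i\dot f_{i+2}=3(\lambda_i m_i+\mu_i m_{i+1}),\qquad i=1,\dots,n-2,$$ in which $\dot f_1$ and $\dot f_n$ are regarded as known. On each interval $[x_i,x_{i+1}]$, $1\le i\le n-1$, $P$ coincides with the cubic polynomial $$P_i(x)=f_i+\dot f_i(x-x_i)+\frac{m_i-\dot f_i}{h_i}(x-x_i)^2+\frac{\dot f_{i+1}+\dot f_i-2m_i}{h_i^2}(x-x_i)^2(x-x_{i+1}).$$ Let $\widetilde P$, with pieces $\widetilde P_i$, be the cubic spline constructed in exactly the same way from the same nodes and data values $f_i$, but with boundary values $\dot{\widetilde f}_1\neq\dot f_1$ and $\dot{\widetilde f}_n\neq\dot f_n$. Its interior derivative values $\dot{\widetilde f}_2,\dots,\dot{\widetilde f}_{n-1}$ are obtained by solving the same system with these boundary values. Then for every $i$ with $2\le i\le n-2$ and every $x\in[x_i,x_{i+1}]$, $$|P_i(x)-\widetilde P_i(x)|\le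 8h_i\left(2^{-i}\lambda_1|\dot{\widetilde f}_1-\dot f_1|+\mu_{n-2}2^{i-n}|\dot{\widetilde f}_n-\dot f_n|\right).$$
   Context: The polynomial $P_i$ is the cubic Hermite interpolant on $[x_i,x_{i+1}]$. It satisfies $P_i(x_i)=f_i$, $P_i(x_{i+1})=f_{i+1}$, $P_i'(x_i)=\dot f_i$ and $P_i'(x_{i+1})=\dot f_{i+1}$. The linear system is exactly the condition that the second derivatives of consecutive pieces agree at the interior nodes, so the spline is $C^2$. The coefficient matrix of the system is strictly diagonally dominant, so the system has a unique solution. *)

theory Defs
  imports Complex_Main
begin

text \<open>Nodes x, data f and derivative values d are indexed 1..n (as in the paper).\<close>

definition hstep :: "(nat \<Rightarrow> real) \<Rightarrow> nat \<Rightarrow> real" where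
  "hstep x i = x (i+1) - x i"

definition slope :: "(nat \<Rightarrow> real) \<Rightarrow> (nat \<Rightarrow> real) \<Rightarrow> nat \<Rightarrow> real" where
  "slope x f i = (f (i+1) - f i) / hstep x i"

definition lam :: "(nat \<Rightarrow> real) \<Rightarrow> nat \<Rightarrow> real" where
  "lam x i = hstep x (i+1) / (hstep x i + hstep x (i+1))"

definition mu :: "(nat \<Rightarrow> real) \<Rightarrow> nat \<Rightarrow> real" where
  "mu x i = hstep x i / (hstep x i + hstep x (i+1))"

definition spline_system ::
  "nat \<Rightarrow> (nat \<Rightarrow> real) \<Rightarrow> (nat \<Rightarrow> real) \<Rightarrow> (nat \<Rightarrow> real) \<Rightarrow> bool" where
  "spline_system n x f d \<longleftrightarrow>
     (\<forall>i. 1 \<le> i \<and> i \<le> n - 2 \<longrightarrow>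
        lam x i * d i + 2 * d (i+1) + mu x i * d (i+2)
          = 3 * (lam x i * slope x f i + mu x i * slope x f (i+1)))"

definition hpiece ::
  "(nat \<Rightarrow> real) \<Rightarrow> (nat \<Rightarrow> real) \<Rightarrow> (nat \<Rightarrow> real) \<Rightarrow> nat \<Rightarrow> real \<Rightarrow> real" where
  "hpiece x f d i t =
     f i + d i * (t - x i)
     + (slope x f i - d i) / hstep x i * (t - x i)^2
     + (d (i+1) + d i - 2 * slope x f i) / (hstep x i)^2 * (t - x i)^2 * (t - x (i+1))"

end

theory Submission
  imports Defs
begin

lemma piece_alg0:
  fixes X0 h a F0 F1 D0 D1 E0 E1 :: real
  assumes "h \<noteq> 0"
  shows "(F0 + D0 * a + ((F1 - F0)/h - D0) / h * a^2
     + (D1 + D0 - 2 * ((F1 - F0)/h)) / h^2 * a^2 * (a - h))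
   - (F0 + E0 * a + ((F1 - F0)/h - E0) / h * a^2
     + (E1 + E0 - 2 * ((F1 - F0)/h)) / h^2 * a^2 * (a - h))
  = ((E1 - D1) * a^2 * (h - a) - (E0 - D0) * a * (h - a)^2) / h^2"
  using assms
  by (simp add: field_simps power2_eq_square)

lemma cubic_bound:
  fixes a b E0 E1 :: real
  assumes "a \<ge> 0" "b \<ge> 0" "a + b > 0"
  shows "\<bar>(E1 * a^2 * b - E0 * a * b^2) / (a+b)^2\<bar> \<le> (a+b)/4 * (\<bar>E0\<bar> + \<bar>E1\<bar>)"
proof -
  have ab: "a * b \<le> (a+b)^2/4" using sum_power2_ge_zero[of "a-b" 0]
    by (simp add: power2_eq_square field_simps) 
  have "\<bar>E1 * a^2 * b - E0 * a * b^2\<bar> \<le> \<bar>E1 * ((a*b) * a)\<bar> + \<bar>E0 * ((a*b)*b)\<bar>"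
    by (simp add: power2_eq_square algebra_simps abs_triangle_ineq4)
  also have "\<dots> = \<bar>E1\<bar> * ((a*b) * a) + \<bar>E0\<bar> * ((a*b)*b)"
    using assms by (simp add: abs_mult)
  also have "\<dots> \<le> \<bar>E1\<bar> * ((a+b)^2/4 * (a+b)) + \<bar>E0\<bar> * ((a+b)^2/4 * (a+b))"
    using assms ab by (intro add_mono mult_left_mono mult_mono) auto
  also have "\<dots> = ((a+b)/4 * (\<bar>E0\<bar> + \<bar>E1\<bar>)) * (a+b)^2"
    by (simp add: field_simps power2_eq_square)
  finally have N: "\<bar>E1 * a^2 * b - E0 * a * b^2\<bar> \<le> ((a+b)/4 * (\<bar>E0\<bar> + \<bar>E1\<bar>)) * (a+b)^2" .
  have pos: "(a+b)^2 > 0" using assms by simp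
  show ?thesis
    by (simp only: abs_divide abs_of_pos[OF pos] pos_divide_le_eq[OF pos]) (rule N)
qed

lemma super_gen:
  fixes L U X Y :: real
  assumes "0 \<le> L" "L \<le> 1" "U = 1 - L" "X \<ge> 0" "Y \<ge> 0"
  shows "L*(2*X + Y/2) + U*(X/2 + 2*Y) \<le> 2*(X+Y)"
proof -
  have "L*X \<le> X" using assms by (simp add: mult_left_le_one_le)
  moreover have "0 \<le> L*Y" using assms by simp
  moreover have "L*(2*X + Y/2) + U*(X/2 + 2*Y) = X/2 + 2*Y + 3/2*(L*X) - 3/2*(L*Y)"
    unfolding assms(3) by (simp add: field_simps)
  ultimately show ?thesis by argo
qed

lemma hpiece_diff:
  assumes "x i < x (i+1)"
  shows "hpiece x f d i t - hpiece x f dt i t =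
    ((dt (i+1) - d (i+1)) * (t - x i)^2 * (hstep x i - (t - x i)) - (dt i - d i) * (t - x i) * (hstep x i - (t - x i))^2) / (hstep x i)^2"
proof -
  have h: "hstep x i \<noteq> 0" using assms by (simp add: hstep_def)
  have e: "t - x (i+1) = (t - x i) - hstep x i" by (simp add: hstep_def)
  show ?thesis unfolding hpiece_def slope_def e
    using piece_alg0[OF h, of "f i" "d i" "t - x i" "f (i+1)" "d (i+1)" "dt i" "dt (i+1)"]
    by simp
qed

theorem proposition1:
  fixes n :: nat and x f d dt :: "nat \<Rightarrow> real"
  assumes "n \<ge> 3"
    and "\<forall>i. 1 \<le> i \<and> i < n \<longrightarrow> x i < x (i+1)"
    and "spline_system n x f d"
    and "spline_system n x f dt"
    and "dt 1 \<noteq> d 1" and "dt n \<noteq> d n"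
  shows "\<forall>i t. 2 \<le> i \<and> i \<le> n - 2 \<and> x i \<le> t \<and> t \<le> x (i+1) \<longrightarrow>
           \<bar>hpiece x f d i t - hpiece x f dt i t\<bar>
             \<le> 8 * hstep x i * ((1/2)^i * lam x 1 * \<bar>dt 1 - d 1\<bar>
                                + mu x (n-2) * 2 powr (real i - real n) * \<bar>dt n - d n\<bar>)"
proof -
  note n3 = assms(1)
  have hpos: "hstep x j > 0" if "1 \<le> j" "j \<le> n - 1" for j
    using assms(2) that n3 by (simp add: hstep_def)
  have LU: "lam x j > 0 \<and> mu x j > 0 \<and> lam x j + mu x j = 1" if "1 \<le> j" "j \<le> n - 2" for j
  proof -
    have "hstep x j > 0" "hstep x (j+1) > 0" using hpos that by auto
    hence p: "hstep x j + hstep x (j+1) > 0" by simp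
    have "lam x j + mu x j = (hstep x (j+1) + hstep x j) / (hstep x j + hstep x (j+1))"
      unfolding lam_def mu_def by (simp add: add_divide_distrib)
    also have "\<dots> = 1" using p by simp
    finally show ?thesis using p \<open>hstep x j > 0\<close> \<open>hstep x (j+1) > 0\<close>
      unfolding lam_def mu_def by (auto intro: divide_pos_pos)
  qed
  define e where "e j = dt j - d j" for j
  have sys: "lam x j * e j + 2 * e (j+1) + mu x j * e (j+2) = 0" if "1 \<le> j" "j \<le> n - 2" for j
  proof -
    have E1: "lam x j * d j + 2 * d (j+1) + mu x j * d (j+2)
          = 3 * (lam x j * slope x f j + mu x j * slope x f (j+1))"
      using assms(3) that unfolding spline_system_def by blast
    have E2: "lam x j * dt j + 2 * dt (j+1) + mu x j * dt (j+2)
          = 3 * (lam x j * slope x f j + mu x j * slope x f (j+1))"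
      using assms(4) that unfolding spline_system_def by blast
    have "lam x j * e j + 2 * e (j+1) + mu x j * e (j+2)
       = (lam x j * dt j + 2 * dt (j+1) + mu x j * dt (j+2)) - (lam x j * d j + 2 * d (j+1) + mu x j * d (j+2))"
      unfolding e_def by (simp add: algebra_simps)
    thus ?thesis using E1 E2 by simp
  qed
  define A where "A = \<bar>e 1\<bar>"
  define B where "B = \<bar>e n\<bar>"
  define \<alpha> where "\<alpha> = 4 * lam x 1 * A"
  define c where "c = 4 * mu x (n-2) * B / 2^n"
  define \<phi> where "\<phi> j = \<alpha> * (1/2)^j + c * 2^j" for j
  define \<Phi> where "\<Phi> j = (if j = 1 then A else if j = n then B else \<phi> j)" for j
  have l1: "lam x 1 > 0" using LU[of 1] n3 by auto
  have u1: "mu x (n-2) > 0" using LU[of "n-2"] n3 by auto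
  have \<alpha>0: "\<alpha> \<ge> 0" using l1 by (simp add: \<alpha>_def A_def)
  have c0: "c \<ge> 0" using u1 by (simp add: c_def B_def)
  have super: "lam x (k-1) * \<Phi> (k-1) + mu x (k-1) * \<Phi> (k+1) \<le> 2 * \<phi> k"
    if k: "2 \<le> k" "k \<le> n - 1" for k
  proof -
    obtain m where km: "k = Suc m" and m1: "1 \<le> m" using k by (cases k) auto
    define X where "X = \<alpha> * (1/2)^m / 2"
    define Y where "Y = c * 2 * 2^m"
    have X0: "X \<ge> 0" using \<alpha>0 by (simp add: X_def)
    have Y0: "Y \<ge> 0" using c0 by (simp add: Y_def)
    have p0: "\<phi> m = 2*X + Y/2" "\<phi> (Suc m) = X + Y" "\<phi> (Suc (Suc m)) = X/2 + 2*Y"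
      by (simp_all add: \<phi>_def X_def Y_def)
    have LUm: "lam x m > 0" "mu x m > 0" "mu x m = 1 - lam x m" proof -
      have "m \<le> n - 2" using k km by arith
      thus "lam x m > 0" "mu x m > 0" "mu x m = 1 - lam x m" using LU[of m] m1 by auto
    qed
    have gen: "lam x m * (2*X + Y/2) + mu x m * (X/2 + 2*Y) \<le> 2*(X+Y)"
      using LUm X0 Y0 by (intro super_gen) auto
    have XA: "lam x m * A = X" if "m = 1" using that by (simp add: X_def \<alpha>_def)
    have YB: "mu x m * B = Y/2" if "m = n - 2"
    proof -
      have "n = m + 2" using that n3 by simp
      thus ?thesis by (simp add: Y_def c_def power_add)
    qed
    have LX: "lam x m * X \<le> X" "mu x m * X \<le> X" "mu x m * Y \<le> Y" "lam x m * Y \<le> Y"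
      using LUm X0 Y0 by (simp_all add: mult_left_le_one_le)
    show ?thesis
    proof (cases "m = 1")
      case True
      note T = True
      show ?thesis
      proof (cases "m = n - 2")
        case True
        have "n = 3" using T True n3 by simp
        then show ?thesis using XA[OF T] YB[OF True] km T X0 Y0 p0
          by (simp add: \<Phi>_def distrib_left; argo)
      next
        case False
        have "Suc (Suc m) \<noteq> n" using False by simp
        then show ?thesis using XA[OF T] km T X0 Y0 p0 LX
          by (simp add: \<Phi>_def distrib_left; argo)
      qed
    next
      case False
      note F = False
      show ?thesis
      proof (cases "m = n - 2")
        case True
        have "Suc (Suc m) = n" "m \<noteq> n" using True n3 by auto
        then show ?thesis using YB[OF True] km F X0 Y0 p0 LX
          by (simp add: \<Phi>_def distrib_left; argo)
      next
        case False
        have "Suc (Suc m) \<noteq> n" "m \<noteq> n" using False k km by auto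
        then show ?thesis using km F gen p0
          by (simp add: \<Phi>_def distrib_left; argo)
      qed
    qed
  qed
  have bound: "\<bar>e k\<bar> \<le> \<phi> k" if "2 \<le> k" "k \<le> n - 1" for k
  proof -
    define S where "S = {2..n-1}"
    define D where "D j = \<bar>e j\<bar> - \<phi> j" for j
    define M where "M = Max (D ` S)"
    have finS: "finite (D ` S)" by (simp add: S_def)
    have neS: "D ` S \<noteq> {}" using n3 by (simp add: S_def)
    have DM: "D j \<le> M" if "j \<in> S" for j using finS that by (simp add: M_def)
    have "M \<le> 0"
    proof (rule ccontr)
      assume "\<not> M \<le> 0"
      hence Mp: "M > 0" by simp
      obtain k where kS: "k \<in> S" and Dk: "D k = M"
        using Max_in[OF finS neS] unfolding M_def by auto
      have all: "\<bar>e j\<bar> \<le> \<Phi> j + M" if "1 \<le> j" "j \<le> n" for j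
      proof (cases "j = 1 \<or> j = n")
        case True
        then show ?thesis using Mp n3 by (auto simp: \<Phi>_def A_def B_def)
      next
        case False
        hence "j \<in> S" using that by (auto simp: S_def)
        then show ?thesis using DM[of j] False by (simp add: \<Phi>_def D_def)
      qed
      have k2: "2 \<le> k" "k \<le> n - 1" using kS by (auto simp: S_def)
      have sk: "lam x (k-1) * e (k-1) + 2 * e k + mu x (k-1) * e (k+1) = 0"
        using sys[of "k-1"] k2 by simp
      have LUk: "lam x (k-1) > 0" "mu x (k-1) > 0" "lam x (k-1) + mu x (k-1) = 1"
        using LU[of "k-1"] k2 by auto
      have "2 * e k = - (lam x (k-1) * e (k-1) + mu x (k-1) * e (k+1))"
        using sk by argo
      hence "\<bar>2 * e k\<bar> = \<bar>lam x (k-1) * e (k-1) + mu x (k-1) * e (k+1)\<bar>"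
        by (simp only: abs_minus_cancel)
      hence "2 * \<bar>e k\<bar> = \<bar>lam x (k-1) * e (k-1) + mu x (k-1) * e (k+1)\<bar>"
        by (simp add: abs_mult)
      also have "\<dots> \<le> \<bar>lam x (k-1) * e (k-1)\<bar> + \<bar>mu x (k-1) * e (k+1)\<bar>"
        by (rule abs_triangle_ineq)
      also have "\<dots> = lam x (k-1) * \<bar>e (k-1)\<bar> + mu x (k-1) * \<bar>e (k+1)\<bar>"
        using LUk by (simp add: abs_mult)
      also have "\<dots> \<le> lam x (k-1) * (\<Phi> (k-1) + M) + mu x (k-1) * (\<Phi> (k+1) + M)"
        using LUk all[of "k-1"] all[of "k+1"] k2
        by (intro add_mono mult_left_mono) auto
      also have "\<dots> = lam x (k-1) * \<Phi> (k-1) + mu x (k-1) * \<Phi> (k+1) + (lam x (k-1) + mu x (k-1)) * M"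
        by (simp add: algebra_simps)
      also have "\<dots> = lam x (k-1) * \<Phi> (k-1) + mu x (k-1) * \<Phi> (k+1) + M"
        using LUk(3) by simp
      also have "\<dots> \<le> 2 * \<phi> k + M" using super[OF k2] by simp
      finally have "2 * \<bar>e k\<bar> \<le> 2 * \<phi> k + M" .
      moreover have "\<bar>e k\<bar> = \<phi> k + M" using Dk by (simp add: D_def)
      ultimately show False using Mp by simp
    qed
    moreover have "k \<in> S" using that by (simp add: S_def)
    ultimately show ?thesis using DM[of k] by (simp add: D_def)
  qed
  show ?thesis
  proof (intro allI impI)
    fix i t
    assume it: "2 \<le> i \<and> i \<le> n - 2 \<and> x i \<le> t \<and> t \<le> x (i+1)"
    have xi: "x i < x (i+1)" using assms(2) it by auto
    have h: "hstep x i > 0" using xi by (simp add: hstep_def)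
    define a where "a = t - x i"
    have a0: "a \<ge> 0" "hstep x i - a \<ge> 0" using it by (auto simp: a_def hstep_def)
    have "\<bar>hpiece x f d i t - hpiece x f dt i t\<bar>
       = \<bar>(e (i+1) * a^2 * (hstep x i - a) - e i * a * (hstep x i - a)^2) / (a + (hstep x i - a))^2\<bar>"
      unfolding hpiece_diff[OF xi] by (simp add: e_def a_def)
    also have "\<dots> \<le> (a + (hstep x i - a)) / 4 * (\<bar>e i\<bar> + \<bar>e (i+1)\<bar>)"
      using a0 h by (intro cubic_bound) auto
    also have "\<dots> \<le> hstep x i / 4 * (\<phi> i + \<phi> (i+1))"
    proof -
      have "\<bar>e i\<bar> \<le> \<phi> i" "\<bar>e (i+1)\<bar> \<le> \<phi> (i+1)" using bound[of i] bound[of "i+1"] it by auto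
      thus ?thesis using h by (simp add: mult_left_mono add_mono)
    qed
    also have "\<dots> = hstep x i * (3/2 * lam x 1 * A * (1/2)^i + 3 * mu x (n-2) * B * 2^i / 2^n)"
      by (simp add: \<phi>_def \<alpha>_def c_def field_simps)
    also have "\<dots> \<le> 8 * hstep x i * ((1/2)^i * lam x 1 * A + mu x (n-2) * (2^i / 2^n) * B)"
    proof -
      define P where "P = lam x 1 * A * (1/2)^i"
      define Q where "Q = mu x (n-2) * B * 2^i / 2^n"
      have P0: "P \<ge> 0" and Q0: "Q \<ge> 0"
        using l1 u1 by (simp_all add: A_def B_def P_def Q_def)
      have e1: "3/2 * lam x 1 * A * (1/2)^i + 3 * mu x (n-2) * B * 2^i / 2^n = 3/2*P + 3*Q"
        by (simp add: P_def Q_def)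
      have e2: "(1/2)^i * lam x 1 * A + mu x (n-2) * (2^i / 2^n) * B = P + Q"
        by (simp add: P_def Q_def)
      have "hstep x i * (3/2*P + 3*Q) \<le> hstep x i * (8*(P+Q))"
        using h P0 Q0 by (intro mult_left_mono) auto
      moreover have "hstep x i * (8*(P+Q)) = 8 * hstep x i * (P+Q)" by simp
      ultimately show ?thesis unfolding e1 e2 by argo
    qed
    also have "(2::real)^i / 2^n = 2 powr (real i - real n)"
      by (simp add: powr_diff powr_realpow)
    finally show "\<bar>hpiece x f d i t - hpiece x f dt i t\<bar>
             \<le> 8 * hstep x i * ((1/2)^i * lam x 1 * \<bar>dt 1 - d 1\<bar>
                                + mu x (n-2) * 2 powr (real i - real n) * \<bar>dt n - d n\<bar>)"
      by (simp add: A_def B_def e_def)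
  qed
qed

end
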